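(* Let $\alpha\in(0,\pi)$ and let $a,c\in\mathbb{R}^2$ be two distinct points. Then a plane $\alpha$-bend multigraph (resp. a plane $\alpha$-arc multigraph) contains at most two edges between $a$ and $c$, and at most one of them in each of the two open halfplanes bounded by the line $ac$.
   Context: For $\alpha\in(0,\pi)$, an $\alpha$-bend edge between points $a$ and $c$ is a polyline $(a,b,c)$ with a single bend point $b$ (not on the line $ac$) such that the interior angle of the triangle $abc$ at $b$ equals $\alpha$. An $\alpha$-arc edge between $a$ and $c$ is a circular arc with endpoints $a$ and $c$ and central angle $2(\pi-\alpha)$. An $\alpha$-bend (resp. $\alpha$-arc) multigraph is a multigraph embedded in the plane (vertices are distinct points; edges are curves between their endpoints that pairwise do not cross, meet only at common endpoints, and contain no vertex in their relative interior; parallel edges are allowed) in which every edge is an $\alpha$-bend (resp. $\alpha$-arc) edge. *)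

theory Defs
  imports "HOL-Analysis.Analysis"
begin

definition angle_at :: "complex \<Rightarrow> complex \<Rightarrow> complex \<Rightarrow> real" where
  "angle_at u b w = arccos (((u - b) \<bullet> (w - b)) / (norm (u - b) * norm (w - b)))"

definition bend_edge :: "real \<Rightarrow> complex \<Rightarrow> complex \<Rightarrow> complex set \<Rightarrow> bool" where
  "bend_edge \<alpha> u w C \<longleftrightarrow>
     (\<exists>b. \<not> collinear {u, b, w} \<and> angle_at u b w = \<alpha> \<and>
          C = closed_segment u b \<union> closed_segment b w)"

definition arc_edge :: "real \<Rightarrow> complex \<Rightarrow> complex \<Rightarrow> complex set \<Rightarrow> bool" where
  "arc_edge \<alpha> u w C \<longleftrightarrow>
     (\<exists>z0 r \<theta>. r > 0 \<and>
        C = (\<lambda>t. z0 + complex_of_real r * cis t) ` {\<theta> .. \<theta> + 2 * (pi - \<alpha>)} \<and>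
        {u, w} = {z0 + complex_of_real r * cis \<theta>, z0 + complex_of_real r * cis (\<theta> + 2 * (pi - \<alpha>))})"

definition plane_multigraph ::
  "complex set \<Rightarrow> 'e set \<Rightarrow> ('e \<Rightarrow> complex) \<Rightarrow> ('e \<Rightarrow> complex) \<Rightarrow> ('e \<Rightarrow> complex set) \<Rightarrow> bool" where
  "plane_multigraph V E src tgt crv \<longleftrightarrow>
     (\<forall>e\<in>E. src e \<in> V \<and> tgt e \<in> V \<and>
        (\<exists>g. arc g \<and> pathstart g = src e \<and> pathfinish g = tgt e \<and> path_image g = crv e)) \<and>
     (\<forall>e\<in>E. \<forall>v\<in>V. v \<in> crv e \<longrightarrow> v = src e \<or> v = tgt e) \<and>
     (\<forall>e1\<in>E. \<forall>e2\<in>E. e1 \<noteq> e2 \<longrightarrow>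
        crv e1 \<inter> crv e2 \<subseteq> {src e1, tgt e1} \<inter> {src e2, tgt e2})"

definition left_halfplane :: "complex \<Rightarrow> complex \<Rightarrow> complex set" where
  "left_halfplane a c = {z. Im (cnj (c - a) * (z - a)) > 0}"

definition right_halfplane :: "complex \<Rightarrow> complex \<Rightarrow> complex set" where
  "right_halfplane a c = {z. Im (cnj (c - a) * (z - a)) < 0}"

end

theory Submission imports Defs begin
lemma inner_cnj: "(x::complex) \<bullet> y = Re (cnj x * y)"
  by (simp add: inner_complex_def)

lemma circ:
  assumes "0<\<alpha>" "\<alpha><pi" "a\<noteq>c" "\<not>collinear{a,b,c}" "angle_at a b c = \<alpha>"
  defines "w \<equiv> (b-a)/(c-a)"
  shows "Im w \<noteq> 0 \<and> (Re w)^2 + (Im w)^2 - Re w = cos \<alpha> / sin \<alpha> * \<bar>Im w\<bar>"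
proof -
  define d where "d = c - a"
  have d0: "d \<noteq> 0" using assms(3) by (simp add: d_def)
  have bw: "b = a + d * w" using d0 by (simp add: w_def d_def)
  define X where "X = Re w"
  define Y where "Y = Im w"
  have Y0: "Y \<noteq> 0"
  proof
    assume "Y = 0"
    then have "w = of_real X" by (simp add: complex_eq_iff X_def Y_def)
    then have "b = (1 - X) *\<^sub>R a + (1 - (1 - X)) *\<^sub>R c"
      by (simp add: bw d_def scaleR_conv_of_real algebra_simps)
    then have "collinear {a,b,c}" unfolding collinear_3_expand by blast
    with assms(4) show False by simp
  qed
  have ab: "a - b = - d * w" by (simp add: bw)
  have cb: "c - b = d * (1 - w)" by (simp add: bw d_def algebra_simps)
  have inn: "(a - b) \<bullet> (c - b) = (cmod d)^2 * (X^2 + Y^2 - X)"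
    unfolding ab cb inner_cnj X_def Y_def
    by (simp add: cmod_def power2_eq_square algebra_simps)
  have n1: "cmod (a - b) = cmod d * sqrt (X^2+Y^2)"
  proof -
    have "cmod w = sqrt (X^2+Y^2)" by (simp add: cmod_def X_def Y_def)
    then show ?thesis by (simp add: ab norm_mult norm_minus_commute)
  qed
  have n2: "cmod (c - b) = cmod d * sqrt ((1-X)^2+Y^2)"
  proof -
    have "cmod (1 - w) = sqrt ((1-X)^2+Y^2)" by (simp add: cmod_def X_def Y_def)
    then show ?thesis by (simp add: cb norm_mult)
  qed
  define N where "N = sqrt (X^2+Y^2) * sqrt ((1-X)^2+Y^2)"
  have Npos: "N > 0" unfolding N_def using Y0 by (simp add: sum_power2_gt_zero_iff)
  have NN: "N^2 = (X^2+Y^2) * ((1-X)^2+Y^2)" unfolding N_def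
    by (simp add: power_mult_distrib)
  have iden: "(X^2+Y^2-X)^2 + Y^2 = N^2" unfolding NN by (simp add: power2_eq_square algebra_simps)
  define \<rho> where "\<rho> = (X^2+Y^2-X) / N"
  have ratio: "(a - b) \<bullet> (c - b) / (cmod (a - b) * cmod (c - b)) = \<rho>"
  proof -
    have "(a - b) \<bullet> (c - b) / (cmod (a - b) * cmod (c - b)) = ((cmod d)^2 * (X^2+Y^2-X)) / ((cmod d)^2 * N)"
      unfolding inn n1 n2 N_def by (simp add: power2_eq_square mult_ac)
    also have "... = \<rho>" using d0 by (simp add: \<rho>_def)
    finally show ?thesis .
  qed
  have al: "\<alpha> = arccos \<rho>" using assms(5) ratio by (simp add: angle_at_def)
  have rho2: "1 - \<rho>^2 = Y^2 / N^2"
    using iden Npos by (simp add: \<rho>_def power_divide field_simps)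
  have rb: "\<bar>\<rho>\<bar> \<le> 1"
  proof -
    have "\<rho>^2 \<le> 1" using rho2 by (smt (verit) divide_nonneg_nonneg zero_le_power2)
    then show ?thesis using abs_le_square_iff[of \<rho> 1] by simp
  qed
  have cosa: "cos \<alpha> = \<rho>" using al rb by (simp add: cos_arccos_abs)
  have sina: "sin \<alpha> = \<bar>Y\<bar> / N"
    using al rb rho2 Npos by (simp add: sin_arccos_abs real_sqrt_divide)
  have "cos \<alpha> / sin \<alpha> * \<bar>Y\<bar> = X^2+Y^2-X"
    unfolding cosa sina \<rho>_def using Y0 Npos by (simp add: field_simps)
  then show ?thesis using Y0 by (simp add: X_def Y_def)
qed

lemma mono_circ:
  fixes x1 x2 Y1 Y2 k :: real
  assumes "Y1>0" "Y2>0" "x1^2+Y1^2-x1 = k*Y1" "x2^2+Y2^2-x2 = k*Y2" "x1*Y2 \<ge> x2*Y1"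
  shows "Y2*(1-x1) \<le> Y1*(1-x2)"
proof -
  define A1 where "A1 = x1 + k*Y1"
  define A2 where "A2 = x2 + k*Y2"
  define B1 where "B1 = 1 - x1 + k*Y1"
  define B2 where "B2 = 1 - x2 + k*Y2"
  have A1e: "A1 = x1^2+Y1^2" using assms(3) unfolding A1_def by linarith
  have A2e: "A2 = x2^2+Y2^2" using assms(4) unfolding A2_def by linarith
  have A1p: "A1 > 0" using A1e assms(1) by (simp add: add_nonneg_pos)
  have A2p: "A2 > 0" using A2e assms(2) by (simp add: add_nonneg_pos)
  have AB1: "A1 * B1 = (1+k^2)*Y1^2"
    using assms(3) unfolding A1_def B1_def by (simp add: power2_eq_square algebra_simps)
  have AB2: "A2 * B2 = (1+k^2)*Y2^2"
    using assms(4) unfolding A2_def B2_def by (simp add: power2_eq_square algebra_simps)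
  have ord: "Y1 * A2 \<le> Y2 * A1" using assms(5) unfolding A1_def A2_def by (simp add: algebra_simps)
  have kk: "(1+k^2)*Y1*Y2 \<ge> 0" using assms(1,2) by simp
  have "(B1*Y2) * (A1*A2) \<le> (B2*Y1) * (A1*A2)"
  proof -
    have "(B1*Y2) * (A1*A2) = (A1*B1)*(Y2*A2)" by (simp add: ac_simps)
    also have "... = ((1+k^2)*Y1*Y2) * (Y1*A2)" unfolding AB1 by (simp add: power2_eq_square ac_simps)
    also have "... \<le> ((1+k^2)*Y1*Y2) * (Y2*A1)" using ord kk by (rule mult_left_mono)
    also have "... = (A2*B2)*(Y1*A1)" unfolding AB2 by (simp add: power2_eq_square ac_simps)
    also have "... = (B2*Y1) * (A1*A2)" by (simp add: ac_simps)
    finally show ?thesis .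
  qed
  then have "B1*Y2 \<le> B2*Y1" using A1p A2p by (simp add: mult_le_cancel_right)
  then show ?thesis unfolding B1_def B2_def by (simp add: algebra_simps)
qed

lemma bend_pair_core:
  fixes w1 w2 d a :: complex and Y1 Y2 :: real
  assumes d0: "d \<noteq> 0" and Y1: "Y1 > 0" and Y2: "Y2 > 0" and w10: "Im w1 \<noteq> 0"
    and sg: "Im w1 * Y2 = Im w2 * Y1"
    and o1: "Re w1 * Y2 \<ge> Re w2 * Y1" and o2: "Y2*(1 - Re w1) \<le> Y1*(1 - Re w2)"
  shows "\<exists>q. q \<in> closed_segment a (a + d*w1) \<and> q \<in> closed_segment (a + d*w2) (a + d) \<and> q \<noteq> a \<and> q \<noteq> a + d"
proof -
  define D where "D = Re w1 * Y2 + Y1 - Re w2 * Y1"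
  have Dp: "D \<ge> Y1" using o1 unfolding D_def by simp
  have Dp2: "D \<ge> Y2" using o2 unfolding D_def by (simp add: algebra_simps)
  have D0: "D > 0" using Dp Y1 by simp
  define q where "q = a + d * (of_real (Y2 / D) * w1)"
  have m1: "q \<in> closed_segment a (a + d*w1)"
    unfolding closed_segment_def
  proof (intro CollectI exI conjI)
    show "q = (1 - Y2/D) *\<^sub>R a + (Y2/D) *\<^sub>R (a + d*w1)"
      by (simp add: q_def scaleR_conv_of_real algebra_simps add_divide_distrib)
    show "0 \<le> Y2/D" using Y2 D0 by simp
    show "Y2/D \<le> 1" using Dp2 D0 by simp
  qed
  have iden: "of_real Y2 * w1 = of_real Y1 * w2 + of_real (D - Y1)"
    using sg by (simp add: complex_eq_iff D_def algebra_simps)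
  have m2: "q \<in> closed_segment (a + d*w2) (a + d)"
    unfolding closed_segment_def
  proof (intro CollectI exI conjI)
    have "of_real (Y2 / D) * w1 = (of_real Y2 * w1) / of_real D" by simp
    also have "... = (of_real Y1 * w2 + of_real (D - Y1)) / of_real D" unfolding iden ..
    also have "... = of_real (Y1/D) * w2 + of_real (1 - Y1/D)"
      using D0 by (simp add: field_simps)
    finally have "q = a + d * (of_real (Y1/D) * w2 + of_real (1 - Y1/D))" by (simp add: q_def)
    then show "q = (1 - (1 - Y1/D)) *\<^sub>R (a + d*w2) + (1 - Y1/D) *\<^sub>R (a + d)"
      by (simp add: scaleR_conv_of_real algebra_simps add_divide_distrib)
    show "0 \<le> 1 - Y1/D" using Dp D0 by simp
    show "1 - Y1/D \<le> 1" using Y1 D0 by simp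
  qed
  have "Im (q - a) / d \<noteq> 0 \<or> True" by simp
  have qa: "(q - a) / d = of_real (Y2/D) * w1" using d0 by (simp add: q_def)
  have imq: "Im ((q - a) / d) \<noteq> 0" unfolding qa using Y2 D0 w10 by simp
  have "q \<noteq> a" using imq by auto
  moreover have "q \<noteq> a + d" using imq d0 by auto
  ultimately show ?thesis using m1 m2 by blast
qed

definition bend_wit :: "real \<Rightarrow> complex \<Rightarrow> complex \<Rightarrow> complex set \<Rightarrow> complex \<Rightarrow> bool" where
  "bend_wit \<alpha> a c C p \<longleftrightarrow> \<not> collinear {a,p,c} \<and> angle_at a p c = \<alpha> \<and>
     C = closed_segment a p \<union> closed_segment p c"

definition sd :: "complex \<Rightarrow> complex \<Rightarrow> complex \<Rightarrow> real" where
  "sd a c z = Im (cnj (c - a) * (z - a))"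

lemma Im_norm: assumes "a \<noteq> c" shows "Im ((z - a) / (c - a)) = sd a c z / (cmod (c - a))^2"
proof -
  have "(z - a) / (c - a) = ((z - a) * cnj (c - a)) / of_real ((cmod (c - a))^2)"
    by (subst complex_div_cnj) simp
  then show ?thesis by (simp add: sd_def mult.commute Im_divide_of_real)
qed

lemma Im_norm_pos: assumes "a \<noteq> c" shows "Im ((z - a) / (c - a)) > 0 \<longleftrightarrow> sd a c z > 0"
  using assms by (simp add: Im_norm divide_pos_pos zero_less_divide_iff)

lemma bend_pair_dir:
  assumes "0<\<alpha>" "\<alpha><pi" "a\<noteq>c" and b1: "bend_wit \<alpha> a c C1 b1" and b2: "bend_wit \<alpha> a c C2 b2"
  defines "w1 \<equiv> (b1-a)/(c-a)" and "w2 \<equiv> (b2-a)/(c-a)"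
  assumes sg: "Im w1 * \<bar>Im w2\<bar> = Im w2 * \<bar>Im w1\<bar>"
    and o1: "Re w1 * \<bar>Im w2\<bar> \<ge> Re w2 * \<bar>Im w1\<bar>"
  shows "\<exists>q\<in>C1\<inter>C2. q \<noteq> a \<and> q \<noteq> c"
proof -
  define d where "d = c - a"
  have d0: "d \<noteq> 0" using assms(3) by (simp add: d_def)
  have c1: "Im w1 \<noteq> 0 \<and> (Re w1)^2 + (Im w1)^2 - Re w1 = cos \<alpha> / sin \<alpha> * \<bar>Im w1\<bar>"
    using circ[of \<alpha> a c b1] assms(1-3) b1 unfolding bend_wit_def w1_def by blast
  have c2: "Im w2 \<noteq> 0 \<and> (Re w2)^2 + (Im w2)^2 - Re w2 = cos \<alpha> / sin \<alpha> * \<bar>Im w2\<bar>"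
    using circ[of \<alpha> a c b2] assms(1-3) b2 unfolding bend_wit_def w2_def by blast
  have o2: "\<bar>Im w2\<bar>*(1 - Re w1) \<le> \<bar>Im w1\<bar>*(1 - Re w2)"
    by (rule mono_circ[of "\<bar>Im w1\<bar>" "\<bar>Im w2\<bar>" "Re w1" "cos \<alpha> / sin \<alpha>" "Re w2"])
       (use c1 c2 o1 in auto)
  obtain q where q: "q \<in> closed_segment a (a + d*w1)" "q \<in> closed_segment (a + d*w2) (a + d)"
     "q \<noteq> a" "q \<noteq> a + d"
    using bend_pair_core[of d "\<bar>Im w1\<bar>" "\<bar>Im w2\<bar>" w1 w2 a] d0 c1 c2 sg o1 o2 by auto
  have e1: "a + d*w1 = b1" "a + d*w2 = b2" "a + d = c" using d0 by (auto simp: d_def w1_def w2_def)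
  have "q \<in> C1" using q(1) b1 unfolding e1 bend_wit_def by blast
  moreover have "q \<in> C2" using q(2) b2 unfolding e1 bend_wit_def by blast
  ultimately show ?thesis using q(3,4) e1 by blast
qed

lemma bend_pair:
  assumes "0<\<alpha>" "\<alpha><pi" "a\<noteq>c" and b1: "bend_wit \<alpha> a c C1 b1" and b2: "bend_wit \<alpha> a c C2 b2"
    and sg: "sd a c b1 > 0 \<longleftrightarrow> sd a c b2 > 0"
  shows "\<exists>q\<in>C1\<inter>C2. q \<noteq> a \<and> q \<noteq> c"
proof -
  define w1 where "w1 = (b1-a)/(c-a)"
  define w2 where "w2 = (b2-a)/(c-a)"
  have "Im w1 \<noteq> 0" using circ[of \<alpha> a c b1] assms(1-3) b1 unfolding bend_wit_def w1_def by blast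
  moreover have "Im w2 \<noteq> 0" using circ[of \<alpha> a c b2] assms(1-3) b2 unfolding bend_wit_def w2_def by blast
  moreover have "Im w1 > 0 \<longleftrightarrow> Im w2 > 0" using sg Im_norm_pos[OF assms(3)] by (simp add: w1_def w2_def)
  ultimately have sg': "Im w1 * \<bar>Im w2\<bar> = Im w2 * \<bar>Im w1\<bar>"
    by (cases "Im w1 > 0") (auto simp: abs_if)
  show ?thesis
  proof (cases "Re w1 * \<bar>Im w2\<bar> \<ge> Re w2 * \<bar>Im w1\<bar>")
    case True
    then show ?thesis using bend_pair_dir[OF assms(1-3) b1 b2] sg' by (simp add: w1_def w2_def)
  next
    case False
    then have "\<exists>q\<in>C2\<inter>C1. q \<noteq> a \<and> q \<noteq> c"
      using bend_pair_dir[OF assms(1-3) b2 b1] sg' by (simp add: w1_def w2_def)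
    then show ?thesis by blast
  qed
qed


definition lam :: "real \<Rightarrow> real" where "lam \<alpha> = (1 + cos \<alpha>)/(2 * sin \<alpha>)"

definition arc_wit :: "real \<Rightarrow> complex \<Rightarrow> complex \<Rightarrow> complex set \<Rightarrow> complex \<Rightarrow> bool" where
  "arc_wit \<alpha> a c C p \<longleftrightarrow> p \<in> C \<and>
     (p = (a+c)/2 - \<i>*(c-a)* of_real (lam \<alpha>) \<or>
      p = (a+c)/2 + \<i>*(c-a)* of_real (lam \<alpha>))"

lemma sd_m1: "sd a c ((a+c)/2 - \<i>*(c-a)* of_real l) = - ((cmod (c-a))^2 * l)"
proof -
  define d where "d = c - a"
  have "(a+c)/2 - \<i>*(c-a)* of_real l - a = d * (1/2 - \<i>* of_real l)" by (simp add: d_def field_simps)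
  then have "cnj (c-a) * ((a+c)/2 - \<i>*(c-a)* of_real l - a) = (cnj d * d) * (1/2 - \<i>* of_real l)"
    by (simp add: d_def)
  also have "cnj d * d = of_real ((cmod d)^2)" by (metis complex_norm_square mult.commute of_real_power)
  finally show ?thesis by (simp add: sd_def d_def)
qed

lemma sd_m2: "sd a c ((a+c)/2 + \<i>*(c-a)* of_real l) = (cmod (c-a))^2 * l"
  using sd_m1[of a c "-l"] by simp

lemma sd_a: "sd a c a = 0" by (simp add: sd_def)
lemma sd_c: "sd a c c = 0"
proof -
  have "cnj (c-a) * (c - a) = of_real ((cmod (c-a))^2)" by (metis complex_norm_square mult.commute of_real_power)
  then show ?thesis by (simp add: sd_def)
qed

lemma lam_pos: assumes "0<\<alpha>" "\<alpha><pi" shows "lam \<alpha> > 0"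
proof -
  have "cos pi < cos \<alpha>" using assms by (intro cos_monotone_0_pi) auto
  moreover have "sin \<alpha> > 0" using assms by (intro sin_gt_zero) auto
  ultimately show ?thesis by (simp add: lam_def)
qed

lemma arc_wit_sd: assumes "0<\<alpha>" "\<alpha><pi" "a\<noteq>c" "arc_wit \<alpha> a c C p"
  shows "p \<in> C" "sd a c p \<noteq> 0"
  using assms lam_pos[OF assms(1,2)] by (auto simp: arc_wit_def sd_m1 sd_m2)

lemma arc_pair:
  assumes "0<\<alpha>" "\<alpha><pi" "a\<noteq>c" and "arc_wit \<alpha> a c C1 p1" "arc_wit \<alpha> a c C2 p2"
    and sg: "sd a c p1 > 0 \<longleftrightarrow> sd a c p2 > 0"
  shows "\<exists>q\<in>C1\<inter>C2. q \<noteq> a \<and> q \<noteq> c"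
proof -
  have "(cmod (c-a))^2 * lam \<alpha> > 0" using assms(3) lam_pos[OF assms(1,2)] by simp
  then have "p1 = p2"
    using assms by (auto simp: arc_wit_def sd_m1 sd_m2)
  moreover have "sd a c p1 \<noteq> 0" "p1 \<in> C1" "p2 \<in> C2" using arc_wit_sd assms by blast+
  ultimately show ?thesis using sd_a sd_c by force
qed

lemma arc_exists:
  assumes "0<\<alpha>" "\<alpha><pi" and ar: "arc_edge \<alpha> u w C" and uw: "{u,w} = {a,c}"
  shows "\<exists>p. arc_wit \<alpha> a c C p"
proof -
  obtain z0 r \<theta> where r: "r > 0"
    and C: "C = (\<lambda>t. z0 + complex_of_real r * cis t) ` {\<theta> .. \<theta> + 2 * (pi - \<alpha>)}"
    and e: "{u, w} = {z0 + complex_of_real r * cis \<theta>, z0 + complex_of_real r * cis (\<theta> + 2 * (pi - \<alpha>))}"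
    using ar unfolding arc_edge_def by blast
  define h where "h = pi - \<alpha>"
  define \<omega> where "\<omega> = cis (\<theta> + h)"
  define P where "P = z0 + complex_of_real r * cis \<theta>"
  define Q where "Q = z0 + complex_of_real r * cis (\<theta> + 2 * (pi - \<alpha>))"
  define l where "l = lam \<alpha>"
  define m where "m = z0 + complex_of_real r * \<omega>"
  have hp: "h > 0" using assms by (simp add: h_def)
  have mC: "m \<in> C" unfolding C m_def \<omega>_def using hp by (auto simp: h_def)
  have sh: "sin h > 0" using assms sin_gt_zero[of \<alpha>] by (simp add: h_def)
  have lh: "2 * sin h * l = 1 - cos h" using sh by (simp add: l_def h_def lam_def)
  have e1: "cis \<theta> = \<omega> * cis (-h)" by (simp add: \<omega>_def cis_mult)
  have e2: "cis (\<theta> + 2 * (pi - \<alpha>)) = \<omega> * cis h" by (simp add: \<omega>_def cis_mult h_def algebra_simps)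
  have e3: "cis h + cis (-h) = 2 * of_real (cos h)" by (simp add: complex_eq_iff)
  have e4: "cis h - cis (-h) = 2 * \<i> * of_real (sin h)" by (simp add: complex_eq_iff)
  have PQ1: "P + Q = 2 * z0 + of_real r * \<omega> * (cis h + cis (-h))"
    unfolding P_def Q_def e1 e2 by (simp add: algebra_simps)
  have PQ2: "Q - P = of_real r * \<omega> * (cis h - cis (-h))"
    unfolding P_def Q_def e1 e2 by (simp add: algebra_simps)
  have "(P+Q)/2 - \<i>*(Q-P)* of_real l = z0 + of_real r * \<omega> * (of_real (cos h) + of_real (2 * sin h * l))"
    unfolding PQ1 PQ2 e3 e4 by (simp add: algebra_simps)
  also have "... = m" unfolding lh m_def by simp
  finally have mid: "m = (P+Q)/2 - \<i>*(Q-P)* of_real l" by simp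
  have "(P = a \<and> Q = c) \<or> (P = c \<and> Q = a)" using e uw unfolding P_def Q_def
    by (metis doubleton_eq_iff)
  then have "m = (a+c)/2 - \<i>*(c-a)* of_real l \<or> m = (a+c)/2 + \<i>*(c-a)* of_real l"
    using mid by (auto simp: algebra_simps)
  then show ?thesis using mC unfolding arc_wit_def l_def by blast
qed

lemma bend_exists:
  assumes "bend_edge \<alpha> u w C" and uw: "{u,w} = {a,c}"
  shows "\<exists>p. bend_wit \<alpha> a c C p"
proof -
  obtain b where b: "\<not> collinear {u, b, w}" "angle_at u b w = \<alpha>"
     "C = closed_segment u b \<union> closed_segment b w" using assms(1) unfolding bend_edge_def by blast
  have sym: "angle_at w b u = angle_at u b w" by (simp add: angle_at_def inner_commute mult.commute)
  have "(u = a \<and> w = c) \<or> (u = c \<and> w = a)" using uw by (metis doubleton_eq_iff)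
  then have "bend_wit \<alpha> a c C b"
  proof
    assume "u = a \<and> w = c" then show ?thesis using b unfolding bend_wit_def by simp
  next
    assume h: "u = c \<and> w = a"
    have "collinear {c,b,a} = collinear {a,b,c}" by (simp add: insert_commute)
    then show ?thesis using b h sym unfolding bend_wit_def
      by (auto simp: closed_segment_commute)
  qed
  then show ?thesis by blast
qed

lemma bend_wit_sd: assumes "0<\<alpha>" "\<alpha><pi" "a\<noteq>c" "bend_wit \<alpha> a c C p"
  shows "p \<in> C" "sd a c p \<noteq> 0"
proof -
  show "p \<in> C" using assms(4) unfolding bend_wit_def by auto
  have "Im ((p-a)/(c-a)) \<noteq> 0" using circ[of \<alpha> a c p] assms unfolding bend_wit_def by blast
  then show "sd a c p \<noteq> 0" using Im_norm[OF assms(3)] by simp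
qed

theorem proposition1:
  fixes V :: "complex set" and E :: "'e set"
    and src tgt :: "'e \<Rightarrow> complex" and crv :: "'e \<Rightarrow> complex set"
    and \<alpha> :: real and a c :: complex
  assumes "0 < \<alpha>" and "\<alpha> < pi" and "a \<noteq> c"
    and "plane_multigraph V E src tgt crv"
    and "(\<forall>e\<in>E. bend_edge \<alpha> (src e) (tgt e) (crv e)) \<or>
         (\<forall>e\<in>E. arc_edge \<alpha> (src e) (tgt e) (crv e))"
  shows "finite {e\<in>E. {src e, tgt e} = {a, c}} \<and>
         card {e\<in>E. {src e, tgt e} = {a, c}} \<le> 2 \<and>
         (\<forall>H\<in>{left_halfplane a c, right_halfplane a c}.
            \<forall>e1\<in>E. \<forall>e2\<in>E.
              {src e1, tgt e1} = {a, c} \<and> {src e2, tgt e2} = {a, c} \<and>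
              crv e1 - {a, c} \<subseteq> H \<and> crv e2 - {a, c} \<subseteq> H \<longrightarrow> e1 = e2)"
proof -
  define S where "S = {e\<in>E. {src e, tgt e} = {a, c}}"
  define B where "B = (\<forall>e\<in>E. bend_edge \<alpha> (src e) (tgt e) (crv e))"
  define Wit where "Wit e p = (if B then bend_wit \<alpha> a c (crv e) p else arc_wit \<alpha> a c (crv e) p)" for e p
  have ex: "\<exists>p. Wit e p" if "e \<in> S" for e
  proof (cases B)
    case True
    then show ?thesis using that bend_exists[of \<alpha> "src e" "tgt e" "crv e" a c]
      unfolding Wit_def B_def S_def by auto
  next
    case False
    then have "arc_edge \<alpha> (src e) (tgt e) (crv e)" using assms(5) that unfolding B_def S_def by auto
    then show ?thesis using False that arc_exists[OF assms(1,2), of "src e" "tgt e" "crv e" a c]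
      unfolding Wit_def S_def by auto
  qed
  have wsd: "p \<in> crv e \<and> sd a c p \<noteq> 0" if "Wit e p" for e p
    using that bend_wit_sd[OF assms(1-3)] arc_wit_sd[OF assms(1-3)] unfolding Wit_def
    by (cases B) auto
  have pair: "e1 = e2" if "e1 \<in> S" "e2 \<in> S" "Wit e1 p1" "Wit e2 p2"
     "sd a c p1 > 0 \<longleftrightarrow> sd a c p2 > 0" for e1 e2 p1 p2
  proof (rule ccontr)
    assume ne: "e1 \<noteq> e2"
    have "\<exists>q\<in>crv e1 \<inter> crv e2. q \<noteq> a \<and> q \<noteq> c"
      using that bend_pair[OF assms(1-3)] arc_pair[OF assms(1-3)] unfolding Wit_def
      by (cases B) auto
    then obtain q where q: "q \<in> crv e1 \<inter> crv e2" "q \<noteq> a" "q \<noteq> c" by blast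
    have "crv e1 \<inter> crv e2 \<subseteq> {src e1, tgt e1} \<inter> {src e2, tgt e2}"
      using assms(4) ne that(1,2) unfolding plane_multigraph_def S_def by blast
    also have "... = {a, c}" using that(1,2) unfolding S_def by auto
    finally show False using q by blast
  qed
  define side where "side e = (sd a c (SOME p. Wit e p) > 0)" for e
  have inj: "inj_on side S"
  proof (rule inj_onI)
    fix e1 e2 assume h: "e1 \<in> S" "e2 \<in> S" "side e1 = side e2"
    have "Wit e1 (SOME p. Wit e1 p)" using ex[OF h(1)] by (rule someI_ex)
    moreover have "Wit e2 (SOME p. Wit e2 p)" using ex[OF h(2)] by (rule someI_ex)
    ultimately show "e1 = e2" using pair[OF h(1,2)] h(3) unfolding side_def by blast
  qed
  have fin: "finite S" using finite_imageD[OF _ inj] by simp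
  have card: "card S \<le> 2"
    using card_inj_on_le[OF inj, of UNIV] by (simp add: card_UNIV_bool)
  have third: "e1 = e2" if H: "H \<in> {left_halfplane a c, right_halfplane a c}"
     and e: "e1 \<in> E" "e2 \<in> E" "{src e1, tgt e1} = {a, c}" "{src e2, tgt e2} = {a, c}"
       "crv e1 - {a, c} \<subseteq> H" "crv e2 - {a, c} \<subseteq> H" for H e1 e2
  proof -
    have s: "e1 \<in> S" "e2 \<in> S" using e unfolding S_def by auto
    obtain p1 p2 where p: "Wit e1 p1" "Wit e2 p2" using ex s by blast
    have p1: "p1 \<in> H" using wsd[OF p(1)] e(5) sd_a sd_c by fastforce
    have p2: "p2 \<in> H" using wsd[OF p(2)] e(6) sd_a sd_c by fastforce
    have "sd a c p1 > 0 \<longleftrightarrow> sd a c p2 > 0"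
      using H p1 p2 unfolding left_halfplane_def right_halfplane_def sd_def by auto
    then show ?thesis using pair[OF s p] by blast
  qed
  show ?thesis using fin card third unfolding S_def by blast
qed

end
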